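(* Let $b,c\in\mathbb{N}$, $n,m\ge 1$, and let $\hat Y_{cn,bm}=Y_{cn,bm}/c$, where $Y_{cn,bm}$ is the number of remaining white balls in the generalized OK Corral urn described in the context. Then for every integer $s\ge 1$, \[ \mathbb{E}\big(\hat Y_{cn,bm}^{s}\big)=\frac{1}{(n+m)!}\frac{c^{m}}{b^{m}}\sum_{\ell=0}^{n}(-1)^{n-\ell}\frac{\binom{n+m}{n-\ell}\binom{m+\ell}{\ell}}{\binom{m+\frac{c\ell}{b}}{m}}\,\ell^{m+n-1}\big(f_{s+1}(\ell)Q(\ell)+g_{s+1}(\ell)\big). \] Moreover, for each $s\in\mathbb{N}$ there exists a monic polynomial $M_s(y)=\sum_{i=1}^{2s}m_{i,s}y^i$ of degree $2s$ whose coefficients satisfy the polynomial identities (in the indeterminate $X$) \[ \sum_{i=1}^{2s}m_{i,s}f_{i+1}(X)=0,\qquad \sum_{i=1}^{2s}m_{i,s}g_{i+1}(X)=s!\,2^s X^{s+1}, \] and for such $M_s$, \[ \mathbb{E}\big(M_s(\hat Y_{cn,bm})\big)=\frac{s!\,2^s}{(n+m)!}\frac{c^{m}}{b^{m}}\sum_{\ell=0}^{n}(-1)^{n-\ell}\frac{\binom{n+m}{n-\ell}\binom{m+\ell}{\ell}}{\binom{m+\frac{c\ell}{b}}{m}}\,\ell^{m+n+s}=\frac{s!\,2^s}{n!\,m!}\frac{c^{m}}{b^{m}}\sum_{\ell=0}^{n}(-1)^{n-\ell}\frac{\binom{n}{\ell}}{\binom{m+\frac{c\ell}{b}}{m}}\,\ell^{m+n+s}.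 \]
   Context: The urn: started with $cn$ white and $bm$ black balls; at each step a ball is drawn uniformly at random among all balls present and returned; if it is white, $b$ black balls are removed; if it is black, $c$ white balls are removed. The process stops as soon as no white or no black balls remain; $Y_{cn,bm}$ is the number of white balls then. For real $x$ and integer $k\ge 0$, $\binom{x}{k}=x(x-1)\cdots(x-k+1)/k!$. Define \[ F(z,u)=e^{u(e^{-z}+z-1)},\qquad G(z,u)=e^{u(e^{-z}+z-1)}\int_0^z u\,e^{-t}e^{-u(e^{-t}+t-1)}\,dt, \] and the polynomials $f_n(u)=n![z^n]F(z,u)$, $g_n(u)=n![z^n]G(z,u)$ (coefficient extraction in $z$). $Q$ is Ramanujan's $Q$-function $Q(n)=\sum_{i=0}^{n}\frac{n(n-1)\cdots(n-i+1)}{n^i}$ for $n\ge1$ (the term $\ell=0$ in the sums vanishes because of the factor $\ell^{m+n-1}$ or $\ell^{m+n+s}$). *)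

theory Defs
  imports Complex_Main "HOL-Computational_Algebra.Formal_Power_Series"
begin

text \<open>State: w white balls, k black balls.
  A white draw (probability w/(w+k)) removes b black balls, a black draw
  (probability k/(w+k)) removes c white balls; the process stops as soon as
  w = 0 or k = 0.  urn_exp b c h w k is the expectation of h(Y) where Y is
  the final number of white balls, started from (w,k).  (For b = 0 or c = 0
  the process need not terminate; the value is then set to 0, these cases are
  excluded by the hypotheses of the theorem.)\<close>

function urn_exp :: "nat \<Rightarrow> nat \<Rightarrow> (nat \<Rightarrow> real) \<Rightarrow> nat \<Rightarrow> nat \<Rightarrow> real" where
  "urn_exp b c h w k =
     (if b = 0 \<or> c = 0 then 0
      else if w = 0 \<or> k = 0 then h w
      else (real w / real (w + k)) * urn_exp b c h w (k - b)
         + (real k / real (w + k)) * urn_exp b c h (w - c) k)"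
  by pat_completeness auto
termination
  by (relation "measure (\<lambda>(b,c,h,w,k). w + k)") auto

definition urnA :: "real fps" where
  "urnA = fps_exp (-1) + fps_X - 1"

definition urnF :: "real \<Rightarrow> real fps" where
  "urnF u = fps_compose (fps_exp u) urnA"

definition urnG :: "real \<Rightarrow> real fps" where
  "urnG u = urnF u * fps_integral (fps_const u * fps_exp (-1) * fps_compose (fps_exp (-u)) urnA) 0"

definition f_poly :: "nat \<Rightarrow> real \<Rightarrow> real" where
  "f_poly n u = fact n * fps_nth (urnF u) n"

definition g_poly :: "nat \<Rightarrow> real \<Rightarrow> real" where
  "g_poly n u = fact n * fps_nth (urnG u) n"

definition ramQ :: "nat \<Rightarrow> real" where
  "ramQ n = (\<Sum>i=0..n. (\<Prod>j<i. real (n - j)) / real n ^ i)"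

end

theory Submission
  imports Defs "HOL-Computational_Algebra.Polynomial"
begin


lemma urnA0: "fps_nth urnA 0 = 0" by (simp add: urnA_def)
lemma urnA_deriv: "fps_deriv urnA = 1 - fps_exp (-1)"
  by (simp add: urnA_def flip: fps_const_neg)

lemma urnF_deriv: "fps_deriv (urnF u) = fps_const u * urnF u * (1 - fps_exp (-1))"
  unfolding urnF_def by (simp add: fps_compose_deriv[OF urnA0] urnA_deriv fps_compose_mult_distrib[OF urnA0] mult_ac)

lemma FG_one: "urnF u * fps_compose (fps_exp (-u)) urnA = 1"
proof -
  have "urnF u * fps_compose (fps_exp (-u)) urnA = fps_compose (fps_exp u * fps_exp (-u)) urnA"
    unfolding urnF_def by (simp add: fps_compose_mult_distrib[OF urnA0])
  also have "fps_exp u * fps_exp (-u) = (1::real fps)"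
    by (simp flip: fps_exp_add_mult)
  finally show ?thesis by simp
qed

lemma urnG_deriv: "fps_deriv (urnG u) = fps_const u * (1 - fps_exp (-1)) * urnG u + fps_const u * fps_exp (-1)"
proof -
  define I where "I = fps_integral (fps_const u * fps_exp (-1) * fps_compose (fps_exp (-u)) urnA) (0::real)"
  have "fps_deriv (urnG u) = fps_deriv (urnF u) * I + urnF u * fps_deriv I"
    unfolding urnG_def I_def by simp
  also have "urnF u * fps_deriv I = fps_const u * fps_exp (-1) * (urnF u * fps_compose (fps_exp (-u)) urnA)"
    unfolding I_def by (simp add: fps_deriv_fps_integral mult_ac)
  also have "\<dots> = fps_const u * fps_exp (-1)" by (simp add: FG_one)
  finally show ?thesis unfolding urnG_def I_def urnF_deriv by (simp add: mult_ac)
qed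

lemma urnF0: "fps_nth (urnF u) 0 = 1" by (simp add: urnF_def)
lemma urnG0: "fps_nth (urnG u) 0 = 0" by (simp add: urnG_def)



definition recur :: "real \<Rightarrow> real \<Rightarrow> (nat \<Rightarrow> real) \<Rightarrow> bool" where
  "recur u d x \<longleftrightarrow> (\<forall>i. x (Suc i) = u * (x i - (\<Sum>j\<le>i. real (i choose j) * (-1)^(i-j) * x j)) + d * u * (-1)^i)"

lemma nth_one_minus_exp: "fps_nth (1 - fps_exp (-1::real)) k = (if k = 0 then 1 else 0) - (-1)^k / fact k"
  by (cases k) (auto simp: algebra_simps)

lemma recur_fps:
  fixes X :: "real fps"
  assumes "fps_deriv X = fps_const u * (1 - fps_exp (-1)) * X + fps_const (d*u) * fps_exp (-1)"
  shows "recur u d (\<lambda>i. fact i * fps_nth X i)"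
  unfolding recur_def
proof
  fix i
  have "fps_nth (fps_deriv X) i = real (i+1) * fps_nth X (i+1)" by simp
  also have "fps_deriv X = fps_const u * ((1 - fps_exp (-1)) * X) + fps_const (d*u) * fps_exp (-1)"
    using assms by (simp add: mult.assoc)
  finally have eq: "real (i+1) * fps_nth X (i+1) = u * (\<Sum>j=0..i. fps_nth (1 - fps_exp (-1)) j * fps_nth X (i-j)) + d*u*(-1)^i / fact i"
    by (simp only: fps_add_nth fps_mult_left_const_nth, simp add: fps_mult_nth)
  have s1: "(\<Sum>j=0..i. fps_nth (1 - fps_exp (-1)) j * fps_nth X (i-j)) = (\<Sum>j=0..i. fps_nth X j * fps_nth (1 - fps_exp (-1)) (i - j))"
    by (rule sum.reindex_bij_witness[of _ "\<lambda>j. i - j" "\<lambda>j. i - j"]) auto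
  have s2: "(\<Sum>j=0..i. fps_nth X j * fps_nth (1 - fps_exp (-1)) (i - j)) =
      fps_nth X i - (\<Sum>j=0..i. fps_nth X j * (-1)^(i-j) / fact (i-j))"
  proof -
    have "(\<Sum>j=0..i. fps_nth X j * fps_nth (1 - fps_exp (-1)) (i - j)) =
       (\<Sum>j=0..i. (if j = i then fps_nth X i else 0) - fps_nth X j * (-1)^(i-j) / fact (i-j))"
      by (rule sum.cong) (auto simp: nth_one_minus_exp right_diff_distrib)
    also have "\<dots> = fps_nth X i - (\<Sum>j=0..i. fps_nth X j * (-1)^(i-j) / fact (i-j))"
      by (simp add: sum_subtractf sum.delta')
    finally show ?thesis .
  qed
  have s3: "fact i * (\<Sum>j=0..i. fps_nth X j * (-1)^(i-j) / fact (i-j)) = (\<Sum>j\<le>i. real (i choose j) * (-1)^(i-j) * (fact j * fps_nth X j))"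
    unfolding sum_distrib_left atMost_atLeast0
    by (rule sum.cong) (auto simp: binomial_fact field_simps)
  have "fact (Suc i) * fps_nth X (Suc i) = fact i * (real (i+1) * fps_nth X (i+1))" by (simp add: algebra_simps)
  also have "\<dots> = u * (fact i * fps_nth X i - fact i * (\<Sum>j=0..i. fps_nth X j * (-1)^(i-j) / fact (i-j))) + d*u*(-1)^i"
    unfolding eq s1 s2 by (simp add: field_simps)
  finally show "fact (Suc i) * fps_nth X (Suc i) = u * (fact i * fps_nth X i - (\<Sum>j\<le>i. real (i choose j) * (-1)^(i-j) * (fact j * fps_nth X j))) + d * u * (-1)^i"
    using s3 by simp
qed

lemma recur_f: "recur u 0 (\<lambda>i. f_poly i u)"
  unfolding f_poly_def by (rule recur_fps) (simp add: urnF_deriv mult_ac)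

lemma recur_g: "recur u 1 (\<lambda>i. g_poly i u)"
  unfolding g_poly_def by (rule recur_fps) (simp add: urnG_deriv mult_ac)

lemma f0: "f_poly 0 u = 1" by (simp add: f_poly_def urnF0)
lemma g0: "g_poly 0 u = 0" by (simp add: g_poly_def urnG0)



lemma recur_unique:
  assumes "recur u d x" "recur u d y" "x 0 = y 0"
  shows "x i = y i"
proof (induction i rule: less_induct)
  case (less i)
  show ?case
  proof (cases i)
    case 0 then show ?thesis using assms(3) by simp
  next
    case (Suc i')
    have "(\<Sum>j\<le>i'. real (i' choose j) * (-1)^(i'-j) * x j) = (\<Sum>j\<le>i'. real (i' choose j) * (-1)^(i'-j) * y j)"
      by (rule sum.cong) (use less Suc in auto)
    moreover have "x i' = y i'" using less Suc by simp
    ultimately show ?thesis using assms(1,2) Suc unfolding recur_def by metis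
  qed
qed

lemma recur_lin:
  assumes "recur u 0 f" "recur u 1 g"
  shows "recur u 1 (\<lambda>i. f i * q + g i)"
  unfolding recur_def
proof
  fix i
  have ef: "f (Suc i) = u * (f i - (\<Sum>j\<le>i. real (i choose j) * (-1)^(i-j) * f j))"
    using assms(1) unfolding recur_def by simp
  have eg: "g (Suc i) = u * (g i - (\<Sum>j\<le>i. real (i choose j) * (-1)^(i-j) * g j)) + 1 * u * (-1)^i"
    using assms(2) unfolding recur_def by blast
  have s: "(\<Sum>j\<le>i. real (i choose j) * (-1)^(i-j) * (f j * q + g j)) =
     q * (\<Sum>j\<le>i. real (i choose j) * (-1)^(i-j) * f j) + (\<Sum>j\<le>i. real (i choose j) * (-1)^(i-j) * g j)"
    by (simp add: sum_distrib_left sum.distrib algebra_simps)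
  show "f (Suc i) * q + g (Suc i) = u * (f i * q + g i - (\<Sum>j\<le>i. real (i choose j) * (-1)^(i-j) * (f j * q + g j))) + 1 * u * (-1)^i"
    unfolding s ef eg by (simp add: algebra_simps)
qed

definition aa :: "nat \<Rightarrow> nat \<Rightarrow> real" where
  "aa l k = (\<Prod>j<k. real (l - j)) / real l ^ k"

definition psi :: "nat \<Rightarrow> nat \<Rightarrow> real" where
  "psi l i = (\<Sum>k=0..l. aa l k * real k ^ i)"

lemma psi0: "psi l 0 = ramQ l"
  by (simp add: psi_def ramQ_def aa_def)

lemma aa_0: "aa l 0 = 1" by (simp add: aa_def)
lemma aa_beyond: "k > l \<Longrightarrow> aa l k = 0"
proof -
  assume "k > l"
  then have "(\<Prod>j<k. real (l - j)) = 0" by (intro prod_zero) (auto intro!: bexI[of _ l])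
  then show ?thesis by (simp add: aa_def)
qed

lemma aa_step: "l \<ge> 1 \<Longrightarrow> aa l k * real k = real l * (aa l k - aa l (Suc k))"
proof -
  assume l: "l \<ge> 1"
  have "aa l (Suc k) = aa l k * real (l - k) / real l"
    using l by (simp add: aa_def field_simps)
  moreover have "aa l k * real k = aa l k * (real l - real (l - k))"
  proof (cases "k \<le> l")
    case True then show ?thesis by (simp add: of_nat_diff)
  next
    case False then show ?thesis using aa_beyond[of l k] by simp
  qed
  ultimately show ?thesis using l by (simp add: field_simps)
qed

lemma binom_shift: "(\<Sum>j\<le>i. real (i choose j) * (-1)^(i-j) * real k ^ j) = (real k - 1) ^ i"
proof -
  have "(real k + (-1)) ^ i = (\<Sum>j\<le>i. real (i choose j) * real k ^ j * (-1)^(i-j))"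
    by (rule binomial_ring)
  then show ?thesis by (simp add: mult_ac)
qed

lemma recur_psi: "recur (real l) 1 (psi l)"
  unfolding recur_def
proof
  fix i
  have swap: "(\<Sum>j\<le>i. real (i choose j) * (-1)^(i-j) * psi l j) = (\<Sum>k=0..l. aa l k * (real k - 1) ^ i)"
  proof -
    have "(\<Sum>j\<le>i. real (i choose j) * (-1)^(i-j) * psi l j) =
        (\<Sum>k=0..l. aa l k * (\<Sum>j\<le>i. real (i choose j) * (-1)^(i-j) * real k ^ j))"
      unfolding psi_def sum_distrib_left
      by (subst sum.swap) (simp add: mult_ac)
    then show ?thesis by (simp add: binom_shift)
  qed
  show "psi l (Suc i) = real l * (psi l i - (\<Sum>j\<le>i. real (i choose j) * (-1)^(i-j) * psi l j)) + 1 * real l * (-1)^i"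
  proof (cases "l = 0")
    case True then show ?thesis by (simp add: psi_def)
  next
    case False
    then have l: "l \<ge> 1" by simp
    have "psi l (Suc i) = (\<Sum>k=0..l. real l * (aa l k - aa l (Suc k)) * real k ^ i)"
      unfolding psi_def by (rule sum.cong) (auto simp: aa_step[OF l, symmetric] mult_ac)
    also have "\<dots> = real l * ((\<Sum>k=0..l. aa l k * real k ^ i) - (\<Sum>k=0..l. aa l (Suc k) * (real (Suc k) - 1) ^ i))"
      by (simp add: sum_distrib_left sum_subtractf algebra_simps)
    also have "(\<Sum>k=0..l. aa l (Suc k) * (real (Suc k) - 1) ^ i) = (\<Sum>k=0..Suc l. aa l k * (real k - 1) ^ i) - (-1)^i"
      by (subst sum.atLeast0_atMost_Suc_shift) (simp add: aa_0)
    also have "\<dots> = (\<Sum>k=0..l. aa l k * (real k - 1) ^ i) - (-1)^i"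
      by (simp add: aa_beyond)
    finally show ?thesis unfolding swap by (simp add: psi_def algebra_simps sum_subtractf)
  qed
qed

lemma D_lemma: "f_poly j (real l) * ramQ l + g_poly j (real l) = psi l j"
proof -
  have "recur (real l) 1 (\<lambda>i. f_poly i (real l) * ramQ l + g_poly i (real l))"
    by (rule recur_lin[OF recur_f recur_g])
  from recur_unique[OF this recur_psi] show ?thesis by (simp add: f0 g0 psi0)
qed



lemma fd_mono: "j < n \<Longrightarrow> (\<Sum>l=0..n. (-1)^(n-l) * real (n choose l) * real l ^ j) = 0"
proof (induction n arbitrary: j)
  case 0 then show ?case by simp
next
  case (Suc n j)
  show ?case
  proof (cases j)
    case 0
    have "(1 + (-1::real)) ^ Suc n = (\<Sum>l\<le>Suc n. real (Suc n choose l) * 1 ^ l * (-1)^(Suc n - l))"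
      by (rule binomial_ring)
    then show ?thesis using 0 by (simp add: atMost_atLeast0 mult_ac)
  next
    case (Suc j')
    with Suc.prems have jn: "j' < n" by simp
    have "(\<Sum>l=0..Suc n. (-1)^(Suc n-l) * real (Suc n choose l) * real l ^ j) =
          (\<Sum>l=0..n. (-1)^(Suc n - Suc l) * real (Suc n choose Suc l) * real (Suc l) ^ j)"
      by (subst sum.atLeast0_atMost_Suc_shift) (simp add: Suc)
    also have "\<dots> = (\<Sum>l=0..n. real (Suc n) * ((-1)^(n - l) * real (n choose l) * real (Suc l) ^ j'))"
    proof (rule sum.cong)
      fix l assume "l \<in> {0..n}"
      have "real (Suc n choose Suc l) * real (Suc l) = real (Suc n) * real (n choose l)"
        using Suc_times_binomial[of l n] by (metis mult.commute of_nat_mult)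
      then show "(-1)^(Suc n - Suc l) * real (Suc n choose Suc l) * real (Suc l) ^ j =
          real (Suc n) * ((-1)^(n - l) * real (n choose l) * real (Suc l) ^ j')"
        by (simp add: Suc)
    qed simp
    also have "\<dots> = real (Suc n) * (\<Sum>t\<le>j'. real (j' choose t) * (\<Sum>l=0..n. (-1)^(n - l) * real (n choose l) * real l ^ t))"
    proof -
      have "\<And>l. real (Suc l) ^ j' = (\<Sum>t\<le>j'. real (j' choose t) * real l ^ t)"
      proof -
        fix l
        have "(real l + 1) ^ j' = (\<Sum>t\<le>j'. real (j' choose t) * real l ^ t * 1 ^ (j' - t))"
          by (rule binomial_ring)
        then show "real (Suc l) ^ j' = (\<Sum>t\<le>j'. real (j' choose t) * real l ^ t)" by (simp add: add.commute)
      qed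
      then show ?thesis
        by (simp add: sum_distrib_left sum_distrib_right mult_ac) (rule sum.swap)
    qed
    also have "\<dots> = 0"
      using Suc.IH jn by simp
    finally show ?thesis .
  qed
qed



lemma fd_poly:
  fixes p :: "real poly"
  assumes "degree p < n"
  shows "(\<Sum>l=0..n. (-1)^(n-l) * real (n choose l) * poly p (real l)) = 0"
proof -
  have "(\<Sum>l=0..n. (-1)^(n-l) * real (n choose l) * poly p (real l)) =
     (\<Sum>t\<le>degree p. coeff p t * (\<Sum>l=0..n. (-1)^(n-l) * real (n choose l) * real l ^ t))"
    unfolding poly_altdef sum_distrib_left sum_distrib_right
    by (subst sum.swap) (simp add: mult_ac)
  also have "\<dots> = 0" using assms by (simp add: fd_mono)
  finally show ?thesis .
qed

definition pk :: "nat \<Rightarrow> nat \<Rightarrow> real poly" where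
  "pk n k = (\<Prod>j<k. [:- real j, 1:]) * monom 1 (n - 1 - k)"

lemma poly_pk: "poly (pk n k) x = (\<Prod>j<k. (x - real j)) * x ^ (n - 1 - k)"
  by (simp add: pk_def poly_prod poly_monom)

lemma degree_pk: "k < n \<Longrightarrow> degree (pk n k) < n"
proof -
  assume kn: "k < n"
  have "degree (\<Prod>j<k. [:- real j, (1::real):]) \<le> (\<Sum>j<k. degree [:- real j, (1::real):])"
    using degree_prod_sum_le[of "{..<k}" "\<lambda>j. [:- real j, (1::real):]"] by (simp add: o_def)
  also have "\<dots> = k" by simp
  finally have "degree (pk n k) \<le> k + (n - 1 - k)"
    unfolding pk_def using degree_mult_le[of "\<Prod>j<k. [:- real j, (1::real):]" "monom 1 (n - 1 - k)"]
    by (simp add: degree_monom_eq)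
  then show ?thesis using kn by simp
qed

lemma aa_pk: "k < n \<Longrightarrow> real l ^ (n - 1) * aa l k = poly (pk n k) (real l)"
proof -
  assume kn: "k < n"
  show ?thesis
  proof (cases "k \<le> l")
    case True
    have pr: "(\<Prod>j<k. real (l - j)) = (\<Prod>j<k. (real l - real j))"
      by (rule prod.cong) (use True in auto)
    show ?thesis
    proof (cases "l = 0")
      case True
      with \<open>k \<le> l\<close> show ?thesis by (simp add: aa_def poly_pk)
    next
      case False
      have "real l ^ (n - 1) = real l ^ k * real l ^ (n - 1 - k)"
        using kn by (simp flip: power_add)
      then show ?thesis using False by (simp add: aa_def poly_pk pr)
    qed
  next
    case False
    have "(\<Prod>j<k. (real l - real j)) = 0" by (rule prod_zero) (use False in \<open>auto intro!: bexI[of _ l]\<close>)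
    then show ?thesis using aa_beyond[of l k] False by (simp add: poly_pk)
  qed
qed


lemma prod_n_minus': "(\<Prod>j<n. (real n - real j)) = fact n"
  unfolding fact_prod_rev[where 'a=real] atLeast0LessThan of_nat_prod by (rule prod.cong) (auto simp: of_nat_diff)

lemma boundary:
  assumes n: "n \<ge> 1"
  shows "(\<Sum>l=0..n. (-1)^(n-l) * real (n choose l) * real l ^ (n-1) * psi l (Suc s)) = fact n * real n ^ s"
proof -
  have "(\<Sum>l=0..n. (-1)^(n-l) * real (n choose l) * real l ^ (n-1) * psi l (Suc s)) =
        (\<Sum>l=0..n. (\<Sum>k=0..n. real k ^ Suc s * ((-1)^(n-l) * real (n choose l) * (real l ^ (n-1) * aa l k))))"
  proof (rule sum.cong)
    fix l assume l: "l \<in> {0..n}"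
    have "psi l (Suc s) = (\<Sum>k=0..n. aa l k * real k ^ Suc s)"
      unfolding psi_def
      by (rule sum.mono_neutral_left) (use l aa_beyond in auto)
    then show "(-1)^(n-l) * real (n choose l) * real l ^ (n-1) * psi l (Suc s) =
       (\<Sum>k=0..n. real k ^ Suc s * ((-1)^(n-l) * real (n choose l) * (real l ^ (n-1) * aa l k)))"
      by (simp add: sum_distrib_left mult_ac)
  qed simp
  also have "\<dots> = (\<Sum>k=0..n. real k ^ Suc s * (\<Sum>l=0..n. (-1)^(n-l) * real (n choose l) * (real l ^ (n-1) * aa l k)))"
    by (subst sum.swap) (simp add: sum_distrib_left)
  also have "\<dots> = real n ^ Suc s * (\<Sum>l=0..n. (-1)^(n-l) * real (n choose l) * (real l ^ (n-1) * aa l n))"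
  proof -
    obtain n' where n': "n = Suc n'" using n by (cases n) auto
    have z: "(\<Sum>l=0..n. (-1)^(n-l) * real (n choose l) * (real l ^ (n-1) * aa l k)) = 0" if "k \<le> n'" for k
    proof -
      have "k < n" using that n' by simp
      then have "(\<Sum>l=0..n. (-1)^(n-l) * real (n choose l) * (real l ^ (n-1) * aa l k)) =
          (\<Sum>l=0..n. (-1)^(n-l) * real (n choose l) * poly (pk n k) (real l))"
        by (simp add: aa_pk[OF \<open>k < n\<close>, simplified])
      also have "\<dots> = 0" by (rule fd_poly[OF degree_pk[OF \<open>k < n\<close>]])
      finally show ?thesis .
    qed
    show ?thesis unfolding n' sum.atLeast0_atMost_Suc[of _ n'] using z n' by simp
  qed
  also have "(\<Sum>l=0..n. (-1)^(n-l) * real (n choose l) * (real l ^ (n-1) * aa l n)) = real n ^ (n-1) * aa n n"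
  proof -
    obtain n' where n': "n = Suc n'" using n by (cases n) auto
    have "\<forall>l\<in>{0..n'}. aa l n = 0" using aa_beyond n' by auto
    then show ?thesis unfolding n' sum.atLeast0_atMost_Suc[of _ n'] by simp
  qed
  also have "real n ^ Suc s * (real n ^ (n-1) * aa n n) = fact n * real n ^ s"
  proof -
    have "Suc s + (n - 1) = s + n" using n by simp
    then have "real n ^ Suc s * real n ^ (n-1) = real n ^ s * real n ^ n"
      by (metis power_add)
    then show ?thesis using n by (simp add: aa_def prod_n_minus' field_simps)
  qed
  finally show ?thesis .
qed



lemma urn_k0: "b \<ge> 1 \<Longrightarrow> c \<ge> 1 \<Longrightarrow> urn_exp b c h w 0 = h w"
  by (subst urn_exp.simps) simp
lemma urn_w0: "b \<ge> 1 \<Longrightarrow> c \<ge> 1 \<Longrightarrow> urn_exp b c h 0 k = h 0"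
  by (subst urn_exp.simps) simp
lemma urn_step: "b \<ge> 1 \<Longrightarrow> c \<ge> 1 \<Longrightarrow> w \<ge> 1 \<Longrightarrow> k \<ge> 1 \<Longrightarrow>
  urn_exp b c h w k = (real w / real (w + k)) * urn_exp b c h w (k - b) + (real k / real (w + k)) * urn_exp b c h (w - c) k"
  by (subst urn_exp.simps) simp

definition tt :: "real \<Rightarrow> (nat \<Rightarrow> real) \<Rightarrow> nat \<Rightarrow> nat \<Rightarrow> nat \<Rightarrow> real" where
  "tt r D n m l = (-1)^(n-l) * real (n choose l) / fact n * r^m / pochhammer (r * real l + 1) m * real l ^ (m+n-1) * D l"

definition TT :: "real \<Rightarrow> (nat \<Rightarrow> real) \<Rightarrow> nat \<Rightarrow> nat \<Rightarrow> real" where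
  "TT r D n m = (\<Sum>l=0..n. tt r D n m l)"

lemma tt_rec:
  assumes r: "r > 0" and l: "l \<le> Suc n'"
  shows "tt r D (Suc n') (Suc m') l * (r * real (Suc n') + real (Suc m')) =
         r * real (Suc n') * tt r D (Suc n') m' l + real (Suc m') * tt r D n' (Suc m') l"
proof -
  define n where "n = Suc n'"
  define m where "m = Suc m'"
  define P where "P = pochhammer (r * real l + 1) m'"
  have "r * real l \<ge> 0" using r by simp
  then have Ppos: "P > 0" unfolding P_def by (intro pochhammer_pos) linarith
  have Pm: "pochhammer (r * real l + 1) m = P * (r * real l + real m)"
    unfolding P_def m_def by (simp add: pochhammer_Suc algebra_simps)
  define K where "K = (-1)^(n-l) * real (n choose l) / fact n * r^m' / P * real l ^ (m'+n') * D l"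
  have e1: "tt r D n m' l = K" unfolding tt_def K_def P_def n_def by simp
  have e2: "tt r D n m l = K * r * real l / (r * real l + real m)"
    unfolding tt_def K_def Pm unfolding n_def m_def by (simp add: field_simps)
  have cb: "real (n' choose l) / fact n' = real (n choose l) * (real n - real l) / fact n"
  proof -
    have "real ((n - l) * (n choose l)) = real (n * (n' choose l))"
      using binomial_absorb_comp[of n l] by (simp add: n_def)
    then have "real (n - l) * real (n choose l) = real n * real (n' choose l)"
      by (simp only: of_nat_mult)
    moreover have "real (n - l) = real n - real l" using l by (simp add: n_def of_nat_diff)
    ultimately have "(real n - real l) * real (n choose l) = real n * real (n' choose l)" by simp
    moreover have "fact n = real n * fact n'" by (simp add: n_def)
    moreover have "n \<noteq> 0" by (simp add: n_def)
    ultimately show ?thesis by (simp add: field_simps)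
  qed
  have sg: "real (n' choose l) * (-1)^(n'-l) = - real (n' choose l) * (-1)^(n-l)"
  proof (cases "l \<le> n'")
    case True
    then have "n - l = Suc (n' - l)" by (simp add: n_def)
    then show ?thesis by simp
  next
    case False then have "n' choose l = 0" by (simp add: binomial_eq_0)
    then show ?thesis by (simp only: of_nat_0 mult_zero_left minus_zero)
  qed
  have e3: "tt r D n' m l = - K * (real n - real l) * r / (r * real l + real m)"
  proof -
    have "tt r D n' m l = (real (n' choose l) * (-1)^(n'-l)) / fact n' * r^m / pochhammer (r * real l + 1) m * real l ^ (m+n'-1) * D l"
      unfolding tt_def by (simp add: mult_ac)
    also have "\<dots> = - (real (n' choose l) / fact n') * (-1)^(n-l) * r^m / pochhammer (r * real l + 1) m * real l ^ (m+n'-1) * D l"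
      unfolding sg by simp
    also have "\<dots> = - K * (real n - real l) * r / (r * real l + real m)"
      unfolding cb K_def Pm by (simp add: m_def field_simps)
    finally show ?thesis .
  qed
  have rl: "r * real l + real m > 0" using r by (simp add: m_def add_nonneg_pos)
  show ?thesis
    unfolding n_def[symmetric] m_def[symmetric] e1 e2 e3
    using rl by (simp add: field_simps)
qed



lemma frac_aux:
  fixes b c n m X Y :: real
  assumes "b > 0" "c > 0" "n > 0" "m > 0"
  shows "(c / b * n * X + m * Y) / (c / b * n + m) = c * n / (c * n + b * m) * X + b * m / (c * n + b * m) * Y"
proof -
  have "c / b * n + m = (c * n + b * m) / b" using assms by (simp add: field_simps)
  moreover have "c / b * n * X + m * Y = (c * n * X + b * m * Y) / b" using assms by (simp add: field_simps)
  moreover have "c * n + b * m > 0" using assms by (simp add: add_pos_pos)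
  ultimately have "(c / b * n * X + m * Y) / (c / b * n + m) = (c * n * X + b * m * Y) / (c * n + b * m)"
    using assms by simp
  then show ?thesis by (simp add: add_divide_distrib)
qed

lemma TT_rec:
  assumes b: "b \<ge> 1" and c: "c \<ge> 1"
  shows "TT (real c / real b) D (Suc n') (Suc m') =
    real (c * Suc n') / real (c * Suc n' + b * Suc m') * TT (real c / real b) D (Suc n') m'
  + real (b * Suc m') / real (c * Suc n' + b * Suc m') * TT (real c / real b) D n' (Suc m')"
proof -
  define r where "r = real c / real b"
  have r: "r > 0" using b c by (simp add: r_def)
  have pt: "tt r D (Suc n') (Suc m') l =
    real (c * Suc n') / real (c * Suc n' + b * Suc m') * tt r D (Suc n') m' l
  + real (b * Suc m') / real (c * Suc n' + b * Suc m') * tt r D n' (Suc m') l" if l: "l \<le> Suc n'" for l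
  proof -
    have e: "tt r D (Suc n') (Suc m') l * (r * real (Suc n') + real (Suc m')) =
         r * real (Suc n') * tt r D (Suc n') m' l + real (Suc m') * tt r D n' (Suc m') l"
      by (rule tt_rec[OF r l])
    have pos: "r * real (Suc n') + real (Suc m') > 0" using r by (simp add: add_pos_pos)
    have bpos: "real b > 0" using b by simp
    have "tt r D (Suc n') (Suc m') l = (r * real (Suc n') * tt r D (Suc n') m' l + real (Suc m') * tt r D n' (Suc m') l) / (r * real (Suc n') + real (Suc m'))"
      using e pos by (simp add: field_simps)
    also have "\<dots> = real c * real (Suc n') / (real c * real (Suc n') + real b * real (Suc m')) * tt r D (Suc n') m' l
        + real b * real (Suc m') / (real c * real (Suc n') + real b * real (Suc m')) * tt r D n' (Suc m') l"
      unfolding r_def by (rule frac_aux) (use b c in auto)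
    also have "\<dots> = real (c * Suc n') / real (c * Suc n' + b * Suc m') * tt r D (Suc n') m' l
        + real (b * Suc m') / real (c * Suc n' + b * Suc m') * tt r D n' (Suc m') l"
      by (simp only: of_nat_mult of_nat_add)
    finally show ?thesis .
  qed
  have last0: "tt r D n' (Suc m') (Suc n') = 0" by (simp add: tt_def)
  have "TT r D (Suc n') (Suc m') = (\<Sum>l=0..Suc n'. real (c * Suc n') / real (c * Suc n' + b * Suc m') * tt r D (Suc n') m' l
  + real (b * Suc m') / real (c * Suc n' + b * Suc m') * tt r D n' (Suc m') l)"
    unfolding TT_def by (rule sum.cong) (use pt in auto)
  also have "\<dots> = real (c * Suc n') / real (c * Suc n' + b * Suc m') * TT r D (Suc n') m'
     + real (b * Suc m') / real (c * Suc n' + b * Suc m') * (\<Sum>l=0..Suc n'. tt r D n' (Suc m') l)"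
    unfolding TT_def sum.distrib sum_distrib_left ..
  also have "(\<Sum>l=0..Suc n'. tt r D n' (Suc m') l) = TT r D n' (Suc m')"
    unfolding TT_def sum.atLeast0_atMost_Suc[of _ n'] last0 by simp
  finally show ?thesis unfolding r_def .
qed

lemma main_urn:
  assumes b: "b \<ge> 1" and c: "c \<ge> 1" and s: "s \<ge> 1"
  shows "n + m \<ge> 1 \<Longrightarrow> urn_exp b c (\<lambda>y. (real y / real c) ^ s) (c * n) (b * m)
      = TT (real c / real b) (\<lambda>l. psi l (Suc s)) n m"
proof (induction "n + m" arbitrary: n m rule: less_induct)
  case less
  define h where "h = (\<lambda>y. (real y / real c) ^ s)"
  define D where "D = (\<lambda>l. psi l (Suc s))"
  show ?case
  proof (cases "m = 0")
    case True
    then have n: "n \<ge> 1" using less.prems by simp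
    have "urn_exp b c h (c * n) (b * m) = real n ^ s"
      using True b c by (simp add: urn_k0 h_def)
    moreover have "TT (real c / real b) D n 0 = real n ^ s"
      using boundary[OF n, of s] unfolding TT_def tt_def D_def
      by (simp add: sum_divide_distrib[symmetric] mult_ac)
    ultimately show ?thesis using True unfolding h_def D_def by simp
  next
    case m: False
    show ?thesis
    proof (cases "n = 0")
      case True
      have "urn_exp b c h (c * n) (b * m) = 0"
        using True b c s by (simp add: urn_w0 h_def)
      moreover have "TT (real c / real b) D n m = 0"
        using True m unfolding TT_def tt_def D_def by (simp add: psi_def)
      ultimately show ?thesis unfolding h_def D_def by simp
    next
      case n: False
      obtain n' where n': "n = Suc n'" using n by (cases n) auto
      obtain m' where m': "m = Suc m'" using m by (cases m) auto
      have "urn_exp b c h (c * n) (b * m) = real (c * n) / real (c * n + b * m) * urn_exp b c h (c * n) (b * m')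
          + real (b * m) / real (c * n + b * m) * urn_exp b c h (c * n') (b * m)"
        using urn_step[of b c "c * n" "b * m" h] b c n m n' m' by (simp add: algebra_simps)
      also have "urn_exp b c h (c * n) (b * m') = TT (real c / real b) D n m'"
        using less.hyps[of n m'] m' n' unfolding h_def D_def by simp
      also have "urn_exp b c h (c * n') (b * m) = TT (real c / real b) D n' m"
        using less.hyps[of n' m] m' n' unfolding h_def D_def by simp
      finally show ?thesis using TT_rec[OF b c, of D n' m'] n' m' unfolding h_def D_def by simp
    qed
  qed
qed



definition ev :: "(nat \<Rightarrow> real) \<Rightarrow> real poly \<Rightarrow> real" where
  "ev x p = (\<Sum>i\<le>degree p. coeff p i * x i)"

lemma ev_bound: "degree p \<le> N \<Longrightarrow> ev x p = (\<Sum>i\<le>N. coeff p i * x i)"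
  unfolding ev_def by (rule sum.mono_neutral_left) (auto simp: coeff_eq_0)

lemma ev_add: "ev x (p + q) = ev x p + ev x q"
proof -
  define N where "N = max (degree p) (degree q)"
  have "degree (p + q) \<le> N" unfolding N_def by (rule degree_add_le) auto
  then show ?thesis
    by (simp add: ev_bound[of _ N] N_def sum.distrib algebra_simps)
qed

lemma ev_smult: "ev x (smult a p) = a * ev x p"
  by (simp add: ev_bound[of "smult a p" "degree p"] ev_def sum_distrib_left mult_ac)

lemma ev_diff: "ev x (p - q) = ev x p - ev x q"
  using ev_add[of x "p - q" q] by simp

lemma ev_0: "ev x 0 = 0" by (simp add: ev_def)

lemma ev_sum: "finite A \<Longrightarrow> ev x (\<Sum>i\<in>A. f i) = (\<Sum>i\<in>A. ev x (f i))"
  by (induction A rule: finite_induct) (auto simp: ev_0 ev_add)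

definition shft :: "real poly \<Rightarrow> real poly" where
  "shft R = pcompose R [:-1, 1:]"

lemma pcompose_as_sum: "pcompose R (q::real poly) = (\<Sum>i\<le>degree R. smult (coeff R i) (q ^ i))"
  by (rule poly_ext) (simp add: poly_pcompose poly_sum poly_altdef[of R])

lemma ev_Lpow: "ev x ([:-1, 1:] ^ i) = (\<Sum>j\<le>i. real (i choose j) * (-1)^(i-j) * x j)"
  unfolding ev_def degree_linear_power
  by (rule sum.cong) (auto simp: coeff_linear_poly_power)

lemma ev_pCons0: "ev x (pCons 0 R) = (\<Sum>i\<le>degree R. coeff R i * x (Suc i))"
proof -
  have "degree (pCons 0 R) \<le> Suc (degree R)" by (simp add: degree_pCons_le)
  then have "ev x (pCons 0 R) = (\<Sum>i\<le>Suc (degree R). coeff (pCons 0 R) i * x i)"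
    by (rule ev_bound)
  also have "\<dots> = (\<Sum>i\<le>degree R. coeff R i * x (Suc i))"
    by (subst sum.atMost_Suc_shift) simp
  finally show ?thesis .
qed

lemma ev_key:
  assumes "recur u d x"
  shows "ev x (pCons 0 R) = u * ev x (R - shft R) + d * u * poly R (-1)"
proof -
  have xs: "x (Suc i) = u * (x i - ev x ([:-1, 1:] ^ i)) + d * u * (-1)^i" for i
    using assms unfolding recur_def ev_Lpow by blast
  have "ev x (pCons 0 R) = (\<Sum>i\<le>degree R. coeff R i * (u * (x i - ev x ([:-1, 1:] ^ i)) + d * u * (-1)^i))"
    unfolding ev_pCons0 xs ..
  also have "\<dots> = u * (ev x R - (\<Sum>i\<le>degree R. coeff R i * ev x ([:-1, 1:] ^ i))) + d * u * (\<Sum>i\<le>degree R. coeff R i * (-1)^i)"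
    unfolding ev_def by (simp add: algebra_simps sum.distrib sum_distrib_left sum_subtractf)
  also have "(\<Sum>i\<le>degree R. coeff R i * ev x ([:-1, 1:] ^ i)) = ev x (shft R)"
    unfolding shft_def pcompose_as_sum by (simp add: ev_sum ev_smult)
  also have "(\<Sum>i\<le>degree R. coeff R i * (-1)^i) = poly R (-1)"
    by (simp add: poly_altdef)
  finally show ?thesis by (simp add: ev_diff)
qed

lemma poly_shft: "poly (shft R) x = poly R (x - 1)"
  by (simp add: shft_def poly_pcompose)

lemma shft_monom: "shft (monom a k) = smult a ([:-1, 1:] ^ k)"
  by (rule poly_ext) (simp add: poly_shft poly_monom)

lemma coeff_nabla_monom:
  "coeff (monom a k - shft (monom a k)) j =
     (if j \<ge> k then 0 else - a * real (k choose j) * (-1)^(k-j))"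
proof -
  have c: "coeff ([:-1, 1:] ^ k) j = (if j \<le> k then real (k choose j) * (-1)^(k-j) else 0)"
    by (auto simp: coeff_linear_poly_power coeff_eq_0 degree_linear_power)
  show ?thesis unfolding shft_monom by (auto simp: c coeff_monom)
qed



lemma shft_add: "shft (p + q) = shft p + shft q" by (simp add: shft_def pcompose_add)
lemma shft_const: "shft [:a:] = [:a:]" by (simp add: shft_def)

lemma antidiff_ex: "degree q \<le> d \<Longrightarrow> \<exists>R. R - shft R = q \<and> degree R \<le> Suc d \<and> coeff R (Suc d) = coeff q d / real (Suc d)"
proof (induction d arbitrary: q)
  case 0
  then have "degree q = 0" by simp
  then have "[:coeff q 0:] = q" by (rule degree_0_id)
  then have q: "q = [:coeff q 0:]" by simp
  define R where "R = monom (coeff q 0) 1"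
  have "R - shft R = q"
    by (rule poly_ext) (subst q, simp add: R_def poly_shft poly_monom algebra_simps)
  moreover have "degree R \<le> Suc 0" unfolding R_def using degree_monom_le[of "coeff q 0" 1] by simp
  moreover have "coeff R (Suc 0) = coeff q 0 / real (Suc 0)" by (simp add: R_def)
  ultimately show ?case by blast
next
  case (Suc d)
  define c where "c = coeff q (Suc d)"
  define R0 where "R0 = monom (c / real (Suc (Suc d))) (Suc (Suc d))"
  define q' where "q' = q - (R0 - shft R0)"
  have cN: "coeff (R0 - shft R0) j = (if j \<ge> Suc (Suc d) then 0 else - (c / real (Suc (Suc d))) * real (Suc (Suc d) choose j) * (-1)^(Suc (Suc d)-j))" for j
    unfolding R0_def by (rule coeff_nabla_monom)
  have "degree q' \<le> d"
  proof (rule degree_le, intro allI impI)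
    fix j assume j: "d < j"
    show "coeff q' j = 0"
    proof (cases "j = Suc d")
      case True
      have ch: "Suc (Suc d) choose Suc d = Suc (Suc d)"
        using binomial_symmetric[of "Suc d" "Suc (Suc d)"] by simp
      have "coeff (R0 - shft R0) (Suc d) = c"
        unfolding cN using ch by (simp del: coeff_diff)
      then show ?thesis unfolding q'_def True by (simp only: coeff_diff c_def)
    next
      case False
      with j have "j \<ge> Suc (Suc d)" by simp
      moreover then have "coeff q j = 0" using Suc.prems by (intro coeff_eq_0) simp
      moreover have "coeff (R0 - shft R0) j = 0" using \<open>j \<ge> Suc (Suc d)\<close> unfolding cN by simp
      ultimately show ?thesis unfolding q'_def by (simp only: coeff_diff)
    qed
  qed
  from Suc.IH[OF this] obtain R' where R': "R' - shft R' = q'" "degree R' \<le> Suc d" by blast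
  define R where "R = R0 + R'"
  have "R - shft R = q" unfolding R_def shft_add using R'(1) unfolding q'_def by (simp add: algebra_simps)
  moreover have "degree R \<le> Suc (Suc d)"
    unfolding R_def using R'(2) degree_monom_le[of "c / real (Suc (Suc d))" "Suc (Suc d)"]
    by (intro degree_add_le) (auto simp: R0_def)
  moreover have "coeff R (Suc (Suc d)) = coeff q (Suc d) / real (Suc (Suc d))"
    using R'(2) by (simp add: R_def R0_def c_def coeff_eq_0)
  ultimately show ?case by blast
qed

lemma antidiff_ex': "\<exists>R. R - shft R = q \<and> poly R (-1) = 0 \<and> degree R \<le> Suc (degree q) \<and> coeff R (Suc (degree q)) = coeff q (degree q) / real (Suc (degree q))"
proof -
  obtain R where R: "R - shft R = q" "degree R \<le> Suc (degree q)" "coeff R (Suc (degree q)) = coeff q (degree q) / real (Suc (degree q))"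
    using antidiff_ex[of q "degree q"] by blast
  define R2 where "R2 = R - [:poly R (-1):]"
  have "R2 - shft R2 = q"
  proof -
    have "shft R2 = shft R - [:poly R (-1):]"
      unfolding R2_def using shft_add[of "R2" "[:poly R (-1):]"] shft_const unfolding R2_def by simp
    then show ?thesis using R(1) unfolding R2_def by (simp add: algebra_simps)
  qed
  moreover have "poly R2 (-1) = 0" by (simp add: R2_def)
  moreover have "degree R2 \<le> Suc (degree q)"
    unfolding R2_def using R(2) degree_diff_le[of R "Suc (degree q)" "[:poly R (-1):]"] by simp
  moreover have "coeff R2 (Suc (degree q)) = coeff q (degree q) / real (Suc (degree q))"
    using R(3) by (simp add: R2_def)
  ultimately show ?thesis by blast
qed

definition ad :: "real poly \<Rightarrow> real poly" where
  "ad q = (SOME R. R - shft R = q \<and> poly R (-1) = 0 \<and> degree R \<le> Suc (degree q) \<and> coeff R (Suc (degree q)) = coeff q (degree q) / real (Suc (degree q)))"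

lemma ad_spec: "ad q - shft (ad q) = q \<and> poly (ad q) (-1) = 0 \<and> degree (ad q) \<le> Suc (degree q) \<and> coeff (ad q) (Suc (degree q)) = coeff q (degree q) / real (Suc (degree q))"
  unfolding ad_def by (rule someI_ex) (rule antidiff_ex')

fun Rch :: "real \<Rightarrow> nat \<Rightarrow> real poly" where
  "Rch C 0 = [:C:]"
| "Rch C (Suc j) = ad (pCons 0 (Rch C j))"

lemma Rch_props: "C \<noteq> 0 \<Longrightarrow> degree (Rch C j) = 2 * j \<and> coeff (Rch C j) (2 * j) = C / (2 ^ j * fact j)"
proof (induction j)
  case 0 then show ?case by simp
next
  case (Suc j)
  then have d: "degree (Rch C j) = 2 * j" and l: "coeff (Rch C j) (2 * j) = C / (2 ^ j * fact j)" by auto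
  have nz: "Rch C j \<noteq> 0" using l Suc.prems by auto
  define q where "q = pCons 0 (Rch C j)"
  have dq: "degree q = Suc (2 * j)" using nz d by (simp add: q_def)
  have lq: "coeff q (degree q) = C / (2 ^ j * fact j)" using dq l by (simp add: q_def)
  have sp: "degree (ad q) \<le> Suc (Suc (2*j))" "coeff (ad q) (Suc (Suc (2*j))) = C / (2 ^ j * fact j) / real (Suc (Suc (2 * j)))"
    using ad_spec[of q] dq lq by auto
  have lv: "C / (2 ^ j * fact j) / real (Suc (Suc (2 * j))) = C / (2 ^ Suc j * fact (Suc j))"
    by (simp add: field_simps)
  have "coeff (ad q) (2 * Suc j) \<noteq> 0" using sp(2) lv Suc.prems by simp
  then have "degree (ad q) \<ge> 2 * Suc j" by (rule le_degree)
  then show ?case using sp lv by (simp add: q_def)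
qed

lemma Rch_ev: "recur u d x \<Longrightarrow> ev x (pCons 0 (Rch C j)) = d * C * u ^ Suc j"
proof (induction j)
  case 0
  then show ?case by (simp add: ev_key shft_const ev_0)
next
  case (Suc j)
  have "ev x (pCons 0 (Rch C (Suc j))) = u * ev x (pCons 0 (Rch C j))"
    using ev_key[OF Suc.prems, of "Rch C (Suc j)"] ad_spec[of "pCons 0 (Rch C j)"] by simp
  then show ?case using Suc by simp
qed

lemma Rch_coeff0: "coeff (Rch C (Suc j)) 0 = 0"
proof -
  define R where "R = Rch C (Suc j)"
  have "poly (R - shft R) 0 = 0" using ad_spec[of "pCons 0 (Rch C j)"] by (simp add: R_def)
  moreover have "poly R (-1) = 0" using ad_spec[of "pCons 0 (Rch C j)"] by (simp add: R_def)
  ultimately have "poly R 0 = 0" by (simp add: poly_shft)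
  then show ?thesis by (simp add: R_def poly_0_coeff_0)
qed



lemma urn_lin:
  assumes b: "b \<ge> 1" and c: "c \<ge> 1" and fin: "finite A"
  shows "urn_exp b c (\<lambda>y. \<Sum>i\<in>A. mc i * h i y) w k = (\<Sum>i\<in>A. mc i * urn_exp b c (h i) w k)"
proof (induction "w + k" arbitrary: w k rule: less_induct)
  case less
  show ?case
  proof (cases "w = 0 \<or> k = 0")
    case True
    then show ?thesis using b c by (subst (1 2) urn_exp.simps) (auto intro!: sum.cong)
  next
    case False
    then have w: "w \<ge> 1" and k: "k \<ge> 1" by auto
    have ih1: "urn_exp b c (\<lambda>y. \<Sum>i\<in>A. mc i * h i y) w (k - b) = (\<Sum>i\<in>A. mc i * urn_exp b c (h i) w (k - b))"
      using less.hyps[of w "k - b"] b k by simp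
    have ih2: "urn_exp b c (\<lambda>y. \<Sum>i\<in>A. mc i * h i y) (w - c) k = (\<Sum>i\<in>A. mc i * urn_exp b c (h i) (w - c) k)"
      using less.hyps[of "w - c" k] c w by simp
    show ?thesis
      unfolding urn_step[OF b c w k, of "\<lambda>y. \<Sum>i\<in>A. mc i * h i y"] ih1 ih2 urn_step[OF b c w k]
      by (simp add: sum_distrib_left sum.distrib algebra_simps)
  qed
qed

lemma binom_id: "l \<le> n \<Longrightarrow> real ((n + m) choose (n - l)) * real ((m + l) choose l) / fact (n + m) = real (n choose l) / (fact n * fact m)"
proof -
  assume l: "l \<le> n"
  have a: "real ((n + m) choose (n - l)) = fact (n + m) / (fact (n - l) * fact (m + l))"
    using l by (subst binomial_fact) auto
  have b: "real ((m + l) choose l) = fact (m + l) / (fact l * fact m)"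
    by (subst binomial_fact) auto
  have c: "real (n choose l) = fact n / (fact l * fact (n - l))"
    using l by (subst binomial_fact) auto
  show ?thesis unfolding a b c by (simp add: field_simps)
qed

lemma gch: "(real m + real c * real l / real b) gchoose m = pochhammer (real c / real b * real l + 1) m / fact m"
  by (simp add: gbinomial_pochhammer')

lemma stmt_conv:
  assumes "b \<ge> 1"
  shows "1 / fact (n + m) * (real c ^ m / real b ^ m) *
         (\<Sum>l=0..n. (-1) ^ (n - l) *
            (real ((n + m) choose (n - l)) * real ((m + l) choose l)
               / ((real m + real c * real l / real b) gchoose m))
            * real l ^ (m + n - 1) * D l) = TT (real c / real b) D n m"
  unfolding TT_def sum_distrib_left
proof (rule sum.cong)
  fix l assume "l \<in> {0..n}"
  then have l: "l \<le> n" by simp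
  have bi: "real ((n + m) choose (n - l)) * real ((m + l) choose l) = real (n choose l) / (fact n * fact m) * fact (n + m)"
    using binom_id[OF l, of m] by (simp add: field_simps)
  have pp: "pochhammer (real c / real b * real l + 1) m > 0"
    by (intro pochhammer_pos) (simp add: add_nonneg_pos)
  show "1 / fact (n + m) * (real c ^ m / real b ^ m) * ((-1) ^ (n - l) *
            (real ((n + m) choose (n - l)) * real ((m + l) choose l)
               / ((real m + real c * real l / real b) gchoose m))
            * real l ^ (m + n - 1) * D l) = tt (real c / real b) D n m l"
    unfolding tt_def gch bi using pp by (simp add: field_simps power_divide)
qed simp

definition tt1 :: "real \<Rightarrow> nat \<Rightarrow> nat \<Rightarrow> nat \<Rightarrow> real" where
  "tt1 r n m l = tt r (\<lambda>_. 1) n m l"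

lemma tt_lin: "tt r D n m l = tt1 r n m l * D l"
  by (simp add: tt_def tt1_def)



lemma rearr: "P1 * P2 = (P::real) \<Longrightarrow> 1 / F * Cc * (B * P1 * (K * P2)) = K / F * Cc * (B * P)"
  by (cases "F = 0") (auto simp: field_simps)

lemma split_first: "(N::nat) \<ge> 1 \<Longrightarrow> (\<Sum>i\<le>N. F i) = F 0 + (\<Sum>i=1..N. F i)"
proof -
  have "{..N} = insert 0 {1..N}" by auto
  then show "(\<Sum>i\<le>N. F i) = F 0 + (\<Sum>i=1..N. F i)" by simp
qed

theorem corollary3:
  fixes b c n m :: nat
  assumes "b \<ge> 1" "c \<ge> 1" "n \<ge> 1" "m \<ge> 1"
  shows
   "(\<forall>s::nat. s \<ge> 1 \<longrightarrow>
       urn_exp b c (\<lambda>y. (real y / real c) ^ s) (c * n) (b * m)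
       = 1 / fact (n + m) * (real c ^ m / real b ^ m) *
         (\<Sum>l=0..n. (-1) ^ (n - l) *
            (real ((n + m) choose (n - l)) * real ((m + l) choose l)
               / ((real m + real c * real l / real b) gchoose m))
            * real l ^ (m + n - 1)
            * (f_poly (s + 1) (real l) * ramQ l + g_poly (s + 1) (real l))))
    \<and> (\<forall>s::nat. s \<ge> 1 \<longrightarrow>
         (\<exists>mc :: nat \<Rightarrow> real. mc (2 * s) = 1
            \<and> (\<forall>X::real. (\<Sum>i=1..2*s. mc i * f_poly (i + 1) X) = 0)
            \<and> (\<forall>X::real. (\<Sum>i=1..2*s. mc i * g_poly (i + 1) X)
                         = fact s * 2 ^ s * X ^ (s + 1)))
       \<and> (\<forall>mc :: nat \<Rightarrow> real.
            (mc (2 * s) = 1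
             \<and> (\<forall>X::real. (\<Sum>i=1..2*s. mc i * f_poly (i + 1) X) = 0)
             \<and> (\<forall>X::real. (\<Sum>i=1..2*s. mc i * g_poly (i + 1) X)
                          = fact s * 2 ^ s * X ^ (s + 1)))
            \<longrightarrow>
              urn_exp b c (\<lambda>y. \<Sum>i=1..2*s. mc i * (real y / real c) ^ i) (c * n) (b * m)
              = fact s * 2 ^ s / fact (n + m) * (real c ^ m / real b ^ m) *
                (\<Sum>l=0..n. (-1) ^ (n - l) *
                   (real ((n + m) choose (n - l)) * real ((m + l) choose l)
                      / ((real m + real c * real l / real b) gchoose m))
                   * real l ^ (m + n + s))
            \<and> fact s * 2 ^ s / fact (n + m) * (real c ^ m / real b ^ m) *
                (\<Sum>l=0..n. (-1) ^ (n - l) *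
                   (real ((n + m) choose (n - l)) * real ((m + l) choose l)
                      / ((real m + real c * real l / real b) gchoose m))
                   * real l ^ (m + n + s))
              = fact s * 2 ^ s / (fact n * fact m) * (real c ^ m / real b ^ m) *
                (\<Sum>l=0..n. (-1) ^ (n - l) *
                   (real (n choose l) / ((real m + real c * real l / real b) gchoose m))
                   * real l ^ (m + n + s))))"
proof -
  have b: "b \<ge> 1" and c: "c \<ge> 1" and n: "n \<ge> 1" and m: "m \<ge> 1" using assms by auto
  have nm: "n + m \<ge> 1" using n by simp
  define r where "r = real c / real b"
  have urn1: "urn_exp b c (\<lambda>y. (real y / real c) ^ s) (c * n) (b * m) = TT r (\<lambda>l. psi l (Suc s)) n m"
    if "s \<ge> 1" for s
    unfolding r_def by (rule main_urn[OF b c that nm])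
  have P1: "\<forall>s::nat. s \<ge> 1 \<longrightarrow>
       urn_exp b c (\<lambda>y. (real y / real c) ^ s) (c * n) (b * m)
       = 1 / fact (n + m) * (real c ^ m / real b ^ m) *
         (\<Sum>l=0..n. (-1) ^ (n - l) *
            (real ((n + m) choose (n - l)) * real ((m + l) choose l)
               / ((real m + real c * real l / real b) gchoose m))
            * real l ^ (m + n - 1)
            * (f_poly (s + 1) (real l) * ramQ l + g_poly (s + 1) (real l)))"
  proof (intro allI impI)
    fix s :: nat assume s: "s \<ge> 1"
    have "urn_exp b c (\<lambda>y. (real y / real c) ^ s) (c * n) (b * m) = TT r (\<lambda>l. psi l (Suc s)) n m"
      by (rule urn1[OF s])
    also have "\<dots> = TT r (\<lambda>l. f_poly (s + 1) (real l) * ramQ l + g_poly (s + 1) (real l)) n m"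
      by (simp add: D_lemma)
    also have "\<dots> = 1 / fact (n + m) * (real c ^ m / real b ^ m) *
         (\<Sum>l=0..n. (-1) ^ (n - l) *
            (real ((n + m) choose (n - l)) * real ((m + l) choose l)
               / ((real m + real c * real l / real b) gchoose m))
            * real l ^ (m + n - 1)
            * (f_poly (s + 1) (real l) * ramQ l + g_poly (s + 1) (real l)))"
      unfolding r_def by (rule stmt_conv[OF b, symmetric])
    finally show "urn_exp b c (\<lambda>y. (real y / real c) ^ s) (c * n) (b * m) = 1 / fact (n + m) * (real c ^ m / real b ^ m) *
         (\<Sum>l=0..n. (-1) ^ (n - l) *
            (real ((n + m) choose (n - l)) * real ((m + l) choose l)
               / ((real m + real c * real l / real b) gchoose m))
            * real l ^ (m + n - 1)
            * (f_poly (s + 1) (real l) * ramQ l + g_poly (s + 1) (real l)))" .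
  qed
  have P2: "\<forall>s::nat. s \<ge> 1 \<longrightarrow>
         (\<exists>mc :: nat \<Rightarrow> real. mc (2 * s) = 1
            \<and> (\<forall>X::real. (\<Sum>i=1..2*s. mc i * f_poly (i + 1) X) = 0)
            \<and> (\<forall>X::real. (\<Sum>i=1..2*s. mc i * g_poly (i + 1) X)
                         = fact s * 2 ^ s * X ^ (s + 1)))
       \<and> (\<forall>mc :: nat \<Rightarrow> real.
            (mc (2 * s) = 1
             \<and> (\<forall>X::real. (\<Sum>i=1..2*s. mc i * f_poly (i + 1) X) = 0)
             \<and> (\<forall>X::real. (\<Sum>i=1..2*s. mc i * g_poly (i + 1) X)
                          = fact s * 2 ^ s * X ^ (s + 1)))
            \<longrightarrow>
              urn_exp b c (\<lambda>y. \<Sum>i=1..2*s. mc i * (real y / real c) ^ i) (c * n) (b * m)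
              = fact s * 2 ^ s / fact (n + m) * (real c ^ m / real b ^ m) *
                (\<Sum>l=0..n. (-1) ^ (n - l) *
                   (real ((n + m) choose (n - l)) * real ((m + l) choose l)
                      / ((real m + real c * real l / real b) gchoose m))
                   * real l ^ (m + n + s))
            \<and> fact s * 2 ^ s / fact (n + m) * (real c ^ m / real b ^ m) *
                (\<Sum>l=0..n. (-1) ^ (n - l) *
                   (real ((n + m) choose (n - l)) * real ((m + l) choose l)
                      / ((real m + real c * real l / real b) gchoose m))
                   * real l ^ (m + n + s))
              = fact s * 2 ^ s / (fact n * fact m) * (real c ^ m / real b ^ m) *
                (\<Sum>l=0..n. (-1) ^ (n - l) *
                   (real (n choose l) / ((real m + real c * real l / real b) gchoose m))
                   * real l ^ (m + n + s)))"
  proof (intro allI impI conjI)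
    fix s :: nat assume s: "s \<ge> 1"
    then obtain j where j: "s = Suc j" by (cases s) auto
    define C :: real where "C = fact s * 2 ^ s"
    have Cnz: "C \<noteq> 0" by (simp add: C_def)
    define R where "R = Rch C s"
    have dR: "degree R = 2 * s" and lR: "coeff R (2 * s) = 1"
      using Rch_props[OF Cnz, of s] by (auto simp: R_def C_def)
    have R0: "coeff R 0 = 0" unfolding R_def j by (rule Rch_coeff0)
    have evs: "ev x (pCons 0 R) = (\<Sum>i=1..2*s. coeff R i * x (i + 1))" for x
      unfolding ev_pCons0 dR using s by (simp add: split_first R0)
    show "\<exists>mc :: nat \<Rightarrow> real. mc (2 * s) = 1
            \<and> (\<forall>X::real. (\<Sum>i=1..2*s. mc i * f_poly (i + 1) X) = 0)
            \<and> (\<forall>X::real. (\<Sum>i=1..2*s. mc i * g_poly (i + 1) X)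
                         = fact s * 2 ^ s * X ^ (s + 1))"
    proof (intro exI[of _ "coeff R"] conjI allI)
      show "coeff R (2 * s) = 1" by (rule lR)
    next
      fix X :: real
      show "(\<Sum>i=1..2*s. coeff R i * f_poly (i + 1) X) = 0"
        using Rch_ev[OF recur_f, of X C s] evs[of "\<lambda>i. f_poly i X"] by (simp add: R_def)
    next
      fix X :: real
      show "(\<Sum>i=1..2*s. coeff R i * g_poly (i + 1) X) = fact s * 2 ^ s * X ^ (s + 1)"
        using Rch_ev[OF recur_g, of X C s] evs[of "\<lambda>i. g_poly i X"] by (simp add: R_def C_def)
    qed
  next
    fix s :: nat and mc :: "nat \<Rightarrow> real"
    assume s: "s \<ge> 1"
    assume H: "mc (2 * s) = 1
             \<and> (\<forall>X::real. (\<Sum>i=1..2*s. mc i * f_poly (i + 1) X) = 0)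
             \<and> (\<forall>X::real. (\<Sum>i=1..2*s. mc i * g_poly (i + 1) X)
                          = fact s * 2 ^ s * X ^ (s + 1))"
    have Hf: "\<And>X. (\<Sum>i=1..2*s. mc i * f_poly (i + 1) X) = 0" using H by blast
    have Hg: "\<And>X. (\<Sum>i=1..2*s. mc i * g_poly (i + 1) X) = fact s * 2 ^ s * X ^ (s + 1)" using H by blast
    have comb: "(\<Sum>i=1..2*s. mc i * psi l (Suc i)) = fact s * 2 ^ s * real l ^ (s + 1)" for l
    proof -
      have "(\<Sum>i=1..2*s. mc i * psi l (Suc i)) =
         ramQ l * (\<Sum>i=1..2*s. mc i * f_poly (i + 1) (real l)) + (\<Sum>i=1..2*s. mc i * g_poly (i + 1) (real l))"
        by (simp add: D_lemma[symmetric] sum_distrib_left sum.distrib algebra_simps)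
      then show ?thesis using Hf Hg by simp
    qed
    have "urn_exp b c (\<lambda>y. \<Sum>i=1..2*s. mc i * (real y / real c) ^ i) (c * n) (b * m)
        = (\<Sum>i=1..2*s. mc i * urn_exp b c (\<lambda>y. (real y / real c) ^ i) (c * n) (b * m))"
      by (rule urn_lin[OF b c, of "{1..2*s}" mc "\<lambda>i y. (real y / real c) ^ i" "c * n" "b * m"]) (rule finite_atLeastAtMost)
    also have "\<dots> = (\<Sum>i=1..2*s. mc i * TT r (\<lambda>l. psi l (Suc i)) n m)"
    proof (rule sum.cong)
      fix i assume "i \<in> {1..2*s}"
      then have i: "i \<ge> 1" by simp
      show "mc i * urn_exp b c (\<lambda>y. (real y / real c) ^ i) (c * n) (b * m) = mc i * TT r (\<lambda>l. psi l (Suc i)) n m"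
        by (simp only: urn1[OF i])
    qed simp
    also have "\<dots> = (\<Sum>l=0..n. tt1 r n m l * (\<Sum>i=1..2*s. mc i * psi l (Suc i)))"
      unfolding TT_def sum_distrib_left
      by (subst sum.swap) (simp add: tt_lin[of r _ n m] mult_ac)
    also have "\<dots> = TT r (\<lambda>l. fact s * 2 ^ s * real l ^ (s + 1)) n m"
      unfolding TT_def comb by (rule sum.cong) (simp_all add: tt_lin)
    also have "\<dots> = 1 / fact (n + m) * (real c ^ m / real b ^ m) *
         (\<Sum>l=0..n. (-1) ^ (n - l) *
            (real ((n + m) choose (n - l)) * real ((m + l) choose l)
               / ((real m + real c * real l / real b) gchoose m))
            * real l ^ (m + n - 1) * (fact s * 2 ^ s * real l ^ (s + 1)))"
      unfolding r_def by (rule stmt_conv[OF b, symmetric])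
    also have "\<dots> = fact s * 2 ^ s / fact (n + m) * (real c ^ m / real b ^ m) *
                (\<Sum>l=0..n. (-1) ^ (n - l) *
                   (real ((n + m) choose (n - l)) * real ((m + l) choose l)
                      / ((real m + real c * real l / real b) gchoose m))
                   * real l ^ (m + n + s))"
    proof -
      have pw: "real l ^ (m + n - 1) * real l ^ (s + 1) = real l ^ (m + n + s)" for l
      proof -
        have "m + n - 1 + (s + 1) = m + n + s" using n by simp
        then show ?thesis by (metis power_add)
      qed
      show ?thesis unfolding sum_distrib_left
        by (rule sum.cong) (simp_all only: rearr[OF pw])
    qed
    finally show "urn_exp b c (\<lambda>y. \<Sum>i=1..2*s. mc i * (real y / real c) ^ i) (c * n) (b * m)
              = fact s * 2 ^ s / fact (n + m) * (real c ^ m / real b ^ m) *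
                (\<Sum>l=0..n. (-1) ^ (n - l) *
                   (real ((n + m) choose (n - l)) * real ((m + l) choose l)
                      / ((real m + real c * real l / real b) gchoose m))
                   * real l ^ (m + n + s))" .
  next
    fix s :: nat
    show "fact s * 2 ^ s / fact (n + m) * (real c ^ m / real b ^ m) *
                (\<Sum>l=0..n. (-1) ^ (n - l) *
                   (real ((n + m) choose (n - l)) * real ((m + l) choose l)
                      / ((real m + real c * real l / real b) gchoose m))
                   * real l ^ (m + n + s))
              = fact s * 2 ^ s / (fact n * fact m) * (real c ^ m / real b ^ m) *
                (\<Sum>l=0..n. (-1) ^ (n - l) *
                   (real (n choose l) / ((real m + real c * real l / real b) gchoose m))
                   * real l ^ (m + n + s))"
      unfolding sum_distrib_left
    proof (rule sum.cong)
      fix l assume "l \<in> {0..n}"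
      then have l: "l \<le> n" by simp
      have bi: "real ((n + m) choose (n - l)) * real ((m + l) choose l) = real (n choose l) / (fact n * fact m) * fact (n + m)"
        using binom_id[OF l, of m] by (simp add: field_simps)
      show "fact s * 2 ^ s / fact (n + m) * (real c ^ m / real b ^ m) * ((-1) ^ (n - l) *
                   (real ((n + m) choose (n - l)) * real ((m + l) choose l)
                      / ((real m + real c * real l / real b) gchoose m))
                   * real l ^ (m + n + s)) =
            fact s * 2 ^ s / (fact n * fact m) * (real c ^ m / real b ^ m) * ((-1) ^ (n - l) *
                   (real (n choose l) / ((real m + real c * real l / real b) gchoose m))
                   * real l ^ (m + n + s))"
        unfolding bi by (simp add: field_simps)
    qed simp
  qed
  show ?thesis using P1 P2 by blast
qed

end
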